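(* Let $q\in(0,1)$ be a constant. Let $N\sim\mathrm{B}(M,\alpha)$ and $N_1\sim\mathrm{B}(M-1,\alpha)$ be two statistically independent binomial random variables with $M\ge 2$ and $\alpha\in(0,q]\cup\{1\}$. Then \[ \Pr\{N\ge N_1+1 \mid N\ge 1\}\ \ge\ \tfrac12\big[1-1/\sqrt{2\pi}\big]+o_M(1), \] where $o_M(1)$ depends only on $q$ and $M$ (not on $\alpha$) and tends to $0$ as $M\to+\infty$.
   Context: $\mathrm{B}(M,\alpha)$ denotes the binomial distribution with $M$ trials and success probability $\alpha$. *)

theory Defs
  imports "HOL-Probability.Probability"
begin

definition joint_NN1 :: "nat \<Rightarrow> real \<Rightarrow> (nat \<times> nat) pmf" where
  "joint_NN1 M \<alpha> = pair_pmf (binomial_pmf M \<alpha>) (binomial_pmf (M - 1) \<alpha>)"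

definition cond_prob_pmf :: "'a pmf \<Rightarrow> 'a set \<Rightarrow> 'a set \<Rightarrow> real" where
  "cond_prob_pmf p A B = measure_pmf.prob p (A \<inter> B) / measure_pmf.prob p B"

end

theory Submission
  imports Defs
begin


lemma prob_pair_sum:
  fixes A B :: "nat pmf"
  assumes "set_pmf A \<subseteq> {..a}" "set_pmf B \<subseteq> {..b}"
  shows "measure_pmf.prob (pair_pmf A B) S =
    (\<Sum>k\<le>a. \<Sum>j\<le>b. if (k,j) \<in> S then pmf A k * pmf B j else 0)"
proof -
  have sub: "set_pmf (pair_pmf A B) \<subseteq> {..a} \<times> {..b}" using assms by auto
  have "measure_pmf.prob (pair_pmf A B) S = measure_pmf.prob (pair_pmf A B) (S \<inter> ({..a} \<times> {..b}))"
    by (metis (no_types, lifting) Int_assoc inf.absorb_iff2 measure_Int_set_pmf sub)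
  also have "\<dots> = sum (pmf (pair_pmf A B)) (S \<inter> ({..a} \<times> {..b}))"
    by (rule measure_measure_pmf_finite, rule finite_Int[OF disjI2], rule finite_cartesian_product) simp_all
  also have "\<dots> = (\<Sum>x\<in>{..a} \<times> {..b}. if x \<in> S then pmf (pair_pmf A B) x else 0)"
    by (subst sum.inter_restrict[symmetric]) (auto simp: Int_commute)
  also have "\<dots> = (\<Sum>(k,j)\<in>{..a}\<times>{..b}. if (k,j)\<in>S then pmf A k * pmf B j else 0)"
    by (intro sum.cong) (auto simp: pmf_pair)
  also have "\<dots> = (\<Sum>k\<le>a. \<Sum>j\<le>b. if (k,j) \<in> S then pmf A k * pmf B j else 0)"
    by (simp add: sum.cartesian_product)
  finally show ?thesis .
qed

lemma pow_le_exp: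
  fixes x :: real
  assumes "0 \<le> x"
  shows "x ^ n \<le> real n ^ n * exp (x - real n)"
proof (cases "n = 0")
  case True then show ?thesis using assms by simp
next
  case False
  then have n: "real n > 0" by simp
  have "x / n \<le> exp (x / n - 1)" using exp_ge_add_one_self[of "x/n - 1"] by simp
  then have "(x / n) ^ n \<le> exp (x / n - 1) ^ n"
    by (rule power_mono) (use assms n in simp)
  also have "\<dots> = exp (x - n)"
    by (subst exp_of_nat_mult[symmetric]) (use n in \<open>simp add: field_simps\<close>)
  finally have "x ^ n / real n ^ n \<le> exp (x - n)" by (simp add: power_divide)
  then show ?thesis using n by (simp add: field_simps)
qed

lemma key_nat: "(n::nat) ^ n * (n + 2) ^ (n + 1) \<ge> (n + 1) ^ (2 * n + 1)"
proof (cases "n = 0")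
  case True then show ?thesis by simp
next
  case False
  define x :: real where "x = - 1 / (real n + 1)^2"
  have "1 \<le> (real n + 1)^2" by (rule one_le_power) simp
  then have "1 / (real n + 1)^2 \<le> 1" by (simp add: divide_le_eq)
  then have "-1 \<le> x" unfolding x_def by simp
  from Bernoulli_inequality[OF this, of "n+1"]
  have B: "1 + real (n+1) * x \<le> (1 + x) ^ (n + 1)" by simp
  have ne: "1 + (real n * real n + real n * 2) \<noteq> 0"
      by (smt (verit) mult_nonneg_nonneg of_nat_0_le_iff)
  have pos: "(real n + 1) ^ (2*(n+1)) > 0" by simp
  have E1: "(1 + real (n+1) * x) * (real n + 1) ^ (2*(n+1)) = real n * (real n + 1) ^ (2*n+1)"
  proof -
    have "1 + real (n+1) * x = real n / (real n + 1)"
      unfolding x_def using ne by (simp add: field_simps power2_eq_square)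
    moreover have "(real n + 1) ^ (2*(n+1)) = (real n + 1) * (real n + 1) ^ (2*n+1)" by simp
    ultimately show ?thesis by simp
  qed
  have E2: "(1 + x) ^ (n + 1) * (real n + 1) ^ (2*(n+1)) = (real n * (real n + 2)) ^ (n+1)"
  proof -
    have "(1 + x) * (real n + 1) ^ 2 = real n * (real n + 2)"
      unfolding x_def using ne by (simp add: field_simps power2_eq_square)
    then have "((1 + x) * (real n + 1) ^ 2) ^ (n+1) = (real n * (real n + 2)) ^ (n+1)" by simp
    moreover have "((1 + x) * (real n + 1) ^ 2) ^ (n+1) = (1+x)^(n+1) * (real n + 1)^(2*(n+1))"
      by (simp only: power_mult_distrib power_mult)
    ultimately show ?thesis by simp
  qed
  have I: "(1 + real (n+1) * x) * (real n + 1) ^ (2*(n+1)) \<le> (1 + x) ^ (n + 1) * (real n + 1) ^ (2*(n+1))"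
    by (rule mult_right_mono[OF B]) simp
  have "real n * (real n + 1) ^ (2*n+1) \<le> (real n * (real n + 2)) ^ (n+1)"
    using E1 E2 I by linarith
  also have "\<dots> = real n * (real n ^ n * (real n + 2) ^ (n+1))"
    by (simp add: power_mult_distrib)
  finally have "(real n + 1) ^ (2*n+1) \<le> real n ^ n * (real n + 2) ^ (n+1)"
    using False by simp
  then have "real ((n + 1) ^ (2 * n + 1)) \<le> real (n ^ n * (n + 2) ^ (n + 1))"
    by (simp only: of_nat_mult of_nat_power of_nat_add of_nat_1 of_nat_numeral)
  then show ?thesis by (simp only: of_nat_le_iff)
qed




lemma fmono:
  fixes k j :: nat
  assumes "k \<le> j"
  shows "(k+1)^k * j^j \<le> k^k * (j+1)^j"
  using assms
proof (induction j rule: dec_induct)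
  case base then show ?case by simp
next
  case (step j)
  show ?case
  proof (cases "j = 0")
    case True then show ?thesis using step by simp
  next
    case False
    have K: "(j + 1) ^ (2 * j + 1) \<le> j ^ j * (j + 2) ^ (j + 1)" using key_nat[of j] by simp
    have "((k+1)^k * (j+1)^(j+1)) * j^j = ((k+1)^k * j^j) * (j+1)^(j+1)" by (simp add: algebra_simps)
    also have "\<dots> \<le> (k^k * (j+1)^j) * (j+1)^(j+1)" using step.IH by (rule mult_right_mono) simp
    also have "\<dots> = k^k * (j+1)^(2*j+1)"
    proof -
      have "(j+1)^j * (j+1)^(j+1) = (j+1)^(2*j+1)"
        by (metis (no_types) power_add add.assoc mult_2)
      then show ?thesis by (simp add: mult.assoc)
    qed
    also have "\<dots> \<le> k^k * (j ^ j * (j + 2) ^ (j + 1))" using K by (rule mult_left_mono) simp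
    also have "\<dots> = (k^k * (Suc j + 1) ^ Suc j) * j^j" by (simp add: algebra_simps)
    finally have "((k+1)^k * (j+1)^(j+1)) * j^j \<le> (k^k * (Suc j + 1) ^ Suc j) * j^j" .
    then have "(k+1)^k * (j+1)^(j+1) \<le> k^k * (Suc j + 1) ^ Suc j"
      using False by (simp only: mult_le_cancel2) simp
    then show ?thesis by simp
  qed
qed

definition Bn :: "nat \<Rightarrow> nat \<Rightarrow> nat" where
  "Bn m k = (m choose k) * k^k * (m-k)^(m-k)"

lemma absorb: "Suc k * (m choose Suc k) = (m - k) * (m choose k)"
  by (metis binomial_absorb_comp binomial_absorption)

lemma Bn_step:
  assumes "2*k+1 \<le> m"
  shows "Bn m (k+1) \<le> Bn m k"
proof -
  define j where "j = m - k - 1"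
  have mk: "m - k = j + 1" "m - (k+1) = j" using assms unfolding j_def by auto
  have kj: "k \<le> j" using assms unfolding j_def by auto
  have "Bn m (k+1) = (Suc k * (m choose Suc k)) * ((k+1)^k * j^j)"
    unfolding Bn_def mk by (simp add: algebra_simps)
  also have "\<dots> = ((m - k) * (m choose k)) * ((k+1)^k * j^j)" by (simp only: absorb)
  also have "\<dots> \<le> ((m - k) * (m choose k)) * (k^k * (j+1)^j)"
    by (rule mult_left_mono[OF fmono[OF kj]]) simp
  also have "\<dots> = Bn m k" unfolding Bn_def mk by (simp add: algebra_simps)
  finally show ?thesis .
qed

lemma Bn_le_1_half: "1 \<le> k \<Longrightarrow> 2*k \<le> m \<Longrightarrow> Bn m k \<le> Bn m 1"
proof (induction k)
  case 0 then show ?case by simp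
next
  case (Suc k)
  show ?case
  proof (cases "k = 0")
    case True then show ?thesis by simp
  next
    case False
    then have "Bn m (k+1) \<le> Bn m k" using Suc.prems by (intro Bn_step) auto
    also have "\<dots> \<le> Bn m 1" using Suc False by auto
    finally show ?thesis by simp
  qed
qed

lemma Bn_le_1: assumes "1 \<le> k" "k + 1 \<le> m" shows "Bn m k \<le> Bn m 1"
proof (cases "2*k \<le> m")
  case True then show ?thesis using assms Bn_le_1_half by auto
next
  case False
  have "Bn m k = Bn m (m - k)" unfolding Bn_def using assms
    by (simp add: binomial_symmetric[of k m] algebra_simps)
  also have "\<dots> \<le> Bn m 1" using False assms by (intro Bn_le_1_half) auto
  finally show ?thesis .
qed

lemma pmf_le_Bn:
  assumes "0 \<le> \<alpha>" "\<alpha> \<le> 1" "k \<le> m" "m \<ge> 1"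
  shows "pmf (binomial_pmf m \<alpha>) k \<le> real (Bn m k) / real m ^ m"
proof -
  have m: "real m > 0" using assms by simp
  have a: "(\<alpha> * m) ^ k \<le> real k ^ k * exp (\<alpha> * m - k)" using assms by (intro pow_le_exp) simp
  have b: "((1-\<alpha>) * m) ^ (m-k) \<le> real (m-k) ^ (m-k) * exp ((1-\<alpha>) * m - real (m-k))"
    using assms by (intro pow_le_exp) simp
  have "(\<alpha> * m) ^ k * ((1-\<alpha>) * m) ^ (m-k) \<le> (real k ^ k * exp (\<alpha> * m - k)) * (real (m-k) ^ (m-k) * exp ((1-\<alpha>) * m - real (m-k)))"
    using a b assms by (intro mult_mono) auto
  also have "\<dots> = real k ^ k * real (m-k) ^ (m-k) * exp ((\<alpha> * m - k) + ((1-\<alpha>) * m - real (m-k)))"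
    by (simp add: exp_add)
  also have "(\<alpha> * m - k) + ((1-\<alpha>) * m - real (m-k)) = 0" using assms by (simp add: of_nat_diff algebra_simps)
  finally have c0: "(\<alpha> * m) ^ k * ((1-\<alpha>) * m) ^ (m-k) \<le> real k ^ k * real (m-k) ^ (m-k)"
    by simp
  have h: "real m^k * real m^(m-k) = real m^m" using assms by (simp flip: power_add)
  have eq: "(\<alpha> * m) ^ k * ((1-\<alpha>) * m) ^ (m-k) = \<alpha> ^ k * (1-\<alpha>) ^ (m-k) * real m ^ m"
    by (subst h[symmetric]) (simp add: power_mult_distrib mult_ac)
  have c: "\<alpha> ^ k * (1-\<alpha>) ^ (m-k) * real m ^ m \<le> real k ^ k * real (m-k) ^ (m-k)"
    using c0 eq by simp
  have "pmf (binomial_pmf m \<alpha>) k = real (m choose k) * (\<alpha> ^ k * (1-\<alpha>) ^ (m-k) * real m ^ m) / real m ^ m"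
    using assms m by (simp add: field_simps)
  also have "\<dots> \<le> real (m choose k) * (real k ^ k * real (m-k) ^ (m-k)) / real m ^ m"
    using c m by (intro divide_right_mono mult_left_mono) auto
  also have "\<dots> = real (Bn m k) / real m ^ m" unfolding Bn_def by simp
  finally show ?thesis .
qed

lemma pmf_le_s:
  assumes "0 \<le> \<alpha>" "\<alpha> \<le> 1" "1 \<le> k" "k + 1 \<le> m" "m \<ge> 10"
  shows "pmf (binomial_pmf m \<alpha>) k \<le> 9^9 / 10^9"
proof -
  have m: "real m > 0" using assms by simp
  have "pmf (binomial_pmf m \<alpha>) k \<le> real (Bn m k) / real m ^ m" using assms by (intro pmf_le_Bn) auto
  also have "\<dots> \<le> real (Bn m 1) / real m ^ m"
    using Bn_le_1[OF assms(3,4)] m by (intro divide_right_mono) auto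
  also have "\<dots> \<le> 9^9 / 10^9"
  proof -
    have F: "(9+1)^9 * (m-1)^(m-1) \<le> 9^9 * (m-1+1)^(m-1)" using assms by (intro fmono) auto
    have mm: "m - 1 + 1 = m" using assms by simp
    have F': "real ((9+1)^9 * (m-1)^(m-1)) \<le> real (9^9 * m^(m-1))" using F unfolding mm by (simp only: of_nat_le_iff)
    have "Bn m 1 = m * (m-1)^(m-1)" unfolding Bn_def by simp
    then have "real (Bn m 1) * 10^9 = real m * real ((9+1)^9 * (m-1)^(m-1))" by simp
    also have "\<dots> \<le> real m * real (9^9 * m^(m-1))" using F' by (intro mult_left_mono) auto
    also have "\<dots> = 9^9 * real m ^ m"
    proof -
      have "real m ^ m = real m * real m ^ (m-1)" using assms by (cases m) auto
      then show ?thesis by simp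
    qed
    finally have "real (Bn m 1) * 10^9 \<le> 9^9 * real m ^ m" .
    then show ?thesis using m by (simp add: divide_le_eq le_divide_eq mult.commute)
  qed
  finally show ?thesis .
qed




lemma set_pmf_binom_sub: "\<alpha> \<in> {0..1} \<Longrightarrow> set_pmf (binomial_pmf m \<alpha>) \<subseteq> {..m}"
  by (auto simp: set_pmf_binomial_eq split: if_splits)

lemma Q_decomp:
  assumes "0 \<le> \<alpha>" "\<alpha> \<le> 1"
  shows "pmf (binomial_pmf (Suc m) \<alpha>) k =
     \<alpha> * (if k = 0 then 0 else pmf (binomial_pmf m \<alpha>) (k - 1)) + (1 - \<alpha>) * pmf (binomial_pmf m \<alpha>) k"
proof (cases k)
  case 0 then show ?thesis using assms by simp
next
  case (Suc i)
  show ?thesis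
  proof (cases "i < m")
    case True
    then have e: "m - i = Suc (m - Suc i)" by simp
    show ?thesis using assms Suc True
      by (simp add: e binomial_Suc_Suc algebra_simps)
  next
    case False
    then have "m choose Suc i = 0" by simp
    moreover have "m - i = 0" using False by simp
    ultimately show ?thesis using assms Suc False by (simp add: binomial_Suc_Suc algebra_simps)
  qed
qed

lemma sym_split:
  fixes p :: "nat \<Rightarrow> real"
  assumes "finite U"
  shows "(\<Sum>k\<in>U. \<Sum>j\<in>U. p k * p j) =
     2 * (\<Sum>k\<in>U. \<Sum>j\<in>U. if j < k then p k * p j else 0) + (\<Sum>k\<in>U. p k * p k)"
proof -
  have "(\<Sum>k\<in>U. \<Sum>j\<in>U. p k * p j) = (\<Sum>k\<in>U. \<Sum>j\<in>U. (if j < k then p k * p j else 0)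
      + (if k < j then p k * p j else 0) + (if j = k then p k * p j else 0))"
    by (intro sum.cong refl) auto
  also have "\<dots> = (\<Sum>k\<in>U. \<Sum>j\<in>U. if j < k then p k * p j else 0)
      + (\<Sum>k\<in>U. \<Sum>j\<in>U. if k < j then p k * p j else 0) + (\<Sum>k\<in>U. p k * p k)"
    using assms by (simp only: sum.distrib) (simp add: sum.delta)
  also have "(\<Sum>k\<in>U. \<Sum>j\<in>U. if k < j then p k * p j else 0) = (\<Sum>k\<in>U. \<Sum>j\<in>U. if j < k then p k * p j else 0)"
    by (subst sum.swap) (intro sum.cong refl, simp add: mult.commute)
  finally show ?thesis by simp
qed




lemma split4:
  fixes f :: "nat \<Rightarrow> real"
  shows "(\<Sum>k\<le>Suc (Suc m'). f k) = f 0 + (\<Sum>i<m'. f (Suc i)) + f (Suc m') + f (Suc (Suc m'))"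
  by (simp add: sum.atMost_shift[of f m'])

lemma final_arith:
  fixes \<alpha> P u v s :: real
  assumes "0 < \<alpha>" "\<alpha> \<le> 1" "0 \<le> P" "P \<le> u * u + v * v + s * (1-u-v)" "0 \<le> u" "0 \<le> v" "u + v \<le> 1"
    "\<alpha> \<le> 1/2 \<longrightarrow> v \<le> s" "0 \<le> s" "s \<le> 1"
  shows "(1-P)/2 + \<alpha> * P \<ge> (1-s)/2 * (1 - (1-\<alpha>)*u)"
proof (cases "\<alpha> \<le> 1/2")
  case True
  then have vs: "v \<le> s" using assms by simp
  have h1: "(1-2*\<alpha>) * (u * u + v * v + s * (1-u-v) - P) \<ge> 0" using True assms by (intro mult_nonneg_nonneg) auto
  have h2: "(1-2*\<alpha>) * u * (1-u) \<ge> 0" using True assms by (intro mult_nonneg_nonneg) auto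
  have h3: "(1-2*\<alpha>) * v * (s-v) \<ge> 0" using True assms vs by (intro mult_nonneg_nonneg) auto
  have h4: "u * (1-s) * \<alpha> \<ge> 0" using assms by (intro mult_nonneg_nonneg) auto
  have h5: "2 * \<alpha> * s \<ge> 0" using assms by simp
  have eq: "2*((1-P)/2 + \<alpha> * P) - (1-s)*(1-(1-\<alpha>)*u) = (1-2*\<alpha>) * (u * u + v * v + s * (1-u-v) - P)
     + (1-2*\<alpha>) * u * (1-u) + (1-2*\<alpha>) * v * (s-v) + u * (1-s) * \<alpha> + 2 * \<alpha> * s"
    by (simp add: field_simps)
  have eq2: "(1-s)/2 * (1-(1-\<alpha>)*u) = ((1-s)*(1-(1-\<alpha>)*u))/2" by simp
  have G: "0 \<le> 2*((1-P)/2 + \<alpha> * P) - (1-s)*(1-(1-\<alpha>)*u)"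
    unfolding eq using h1 h2 h3 h4 h5 by (intro add_nonneg_nonneg) auto
  have gen: "\<And>L T :: real. 0 \<le> 2*L - T \<Longrightarrow> T/2 \<le> L" by linarith
  show ?thesis unfolding eq2 by (rule gen[OF G])
next
  case False
  have n: "(\<alpha> - 1/2) * P \<ge> 0" using False assms by (intro mult_nonneg_nonneg) auto
  have "(1-P)/2 + \<alpha> * P = 1/2 + (\<alpha> - 1/2) * P" by (simp add: field_simps)
  then have "(1-P)/2 + \<alpha> * P \<ge> 1/2" using n by linarith
  moreover have "(1-s)/2 * (1 - (1-\<alpha>)*u) \<le> (1-s)/2"
    using assms by (intro mult_left_le) (auto intro: mult_nonneg_nonneg)
  moreover have "(1-s)/2 \<le> 1/2" using assms by simp
  ultimately show ?thesis by (meson order_trans)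
qed


lemma main_bound:
  assumes m: "m \<ge> 10" and a: "0 < \<alpha>" "\<alpha> \<le> 1"
  shows "cond_prob_pmf (joint_NN1 (Suc m) \<alpha>) {(n, n1). n \<ge> n1 + 1} {(n, n1). n \<ge> 1}
           \<ge> (1 - 9^9/10^9)/2"
proof -
  define n where "n = Suc m"
  define p where "p = pmf (binomial_pmf m \<alpha>)"
  define Q where "Q = pmf (binomial_pmf (Suc m) \<alpha>)"
  define s :: real where "s = 9^9/10^9"
  have a01: "\<alpha> \<in> {0..1}" using a by simp
  have supA: "set_pmf (binomial_pmf (Suc m) \<alpha>) \<subseteq> {..n}"
    using set_pmf_binom_sub[OF a01, of "Suc m"] n_def by simp
  have supB: "set_pmf (binomial_pmf m \<alpha>) \<subseteq> {..n}"
    using set_pmf_binom_sub[OF a01, of m] n_def by auto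
  have pn: "p n = 0" using a by (simp add: p_def n_def)
  have sum1: "(\<Sum>k\<le>n. p k) = 1" unfolding p_def by (rule sum_pmf_eq_1[OF _ supB]) simp
  have sumQ: "(\<Sum>k\<le>n. Q k) = 1" unfolding Q_def by (rule sum_pmf_eq_1[OF _ supA]) simp
  have pnn: "\<And>k. p k \<ge> 0" by (simp add: p_def)
  have Qd: "\<And>k. Q k = \<alpha> * (if k = 0 then 0 else p (k-1)) + (1-\<alpha>) * p k"
    unfolding Q_def p_def using a by (intro Q_decomp) auto
  have J: "joint_NN1 (Suc m) \<alpha> = pair_pmf (binomial_pmf (Suc m) \<alpha>) (binomial_pmf m \<alpha>)"
    by (simp add: joint_NN1_def)
  define P where "P = (\<Sum>k\<le>n. p k * p k)"
  define Slt where "Slt = (\<Sum>k\<le>n. \<Sum>j\<le>n. if j < k then p k * p j else 0)"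
  define Sle where "Sle = (\<Sum>k\<le>n. \<Sum>j\<le>n. if j \<le> k then p k * p j else 0)"
  have Slt_eq: "Slt = (1 - P)/2"
  proof -
    have "(\<Sum>k\<le>n. \<Sum>j\<le>n. p k * p j) = 1" using sum1 by (simp add: sum_product[symmetric])
    with sym_split[of "{..n}" p] show ?thesis unfolding Slt_def P_def by simp
  qed
  have row: "(\<Sum>j\<le>n. if j \<le> k then p k * p j else 0) = (\<Sum>j\<le>n. if j < k then p k * p j else 0) + p k * p k"
    if k: "k \<le> n" for k
  proof -
    have "(\<Sum>j\<le>n. if j \<le> k then p k * p j else 0) = (\<Sum>j\<le>n. (if j < k then p k * p j else 0) + (if j = k then p k * p j else 0))"
      by (intro sum.cong refl) auto
    also have "\<dots> = (\<Sum>j\<le>n. if j < k then p k * p j else 0) + (\<Sum>j\<le>n. if j = k then p k * p j else 0)"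
      by (rule sum.distrib)
    also have "(\<Sum>j\<le>n. if j = k then p k * p j else 0) = p k * p k" using k by (simp add: sum.delta)
    finally show ?thesis .
  qed
  have Sle_eq: "Sle = Slt + P"
  proof -
    have "Sle = (\<Sum>k\<le>n. (\<Sum>j\<le>n. if j < k then p k * p j else 0) + p k * p k)"
      unfolding Sle_def by (intro sum.cong refl) (simp add: row)
    also have "\<dots> = Slt + P" unfolding Slt_def P_def by (rule sum.distrib)
    finally show ?thesis .
  qed
  define X where "X = (\<Sum>k\<le>n. \<Sum>j\<le>n. if j < k then (if k = 0 then 0 else p (k-1)) * p j else 0)"
  have X_eq: "X = Sle"
  proof -
    have "X = (\<Sum>i<n. \<Sum>j\<le>n. if j < Suc i then p i * p j else 0)"
      unfolding X_def sum.atMost_shift[of "\<lambda>k. (\<Sum>j\<le>n. if j < k then (if k = 0 then 0 else p (k-1)) * p j else 0)" n]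
      by (auto intro!: sum.cong)
    also have "\<dots> = (\<Sum>i\<le>m. \<Sum>j\<le>n. if j \<le> i then p i * p j else 0)"
      unfolding n_def lessThan_Suc_atMost by (intro sum.cong refl) auto
    also have "\<dots> = Sle" unfolding Sle_def n_def using pn[unfolded n_def] by simp
    finally show ?thesis .
  qed
  have Num: "measure_pmf.prob (joint_NN1 (Suc m) \<alpha>) {(k, j). k \<ge> j + 1} = Slt + \<alpha> * P"
  proof -
    have "measure_pmf.prob (joint_NN1 (Suc m) \<alpha>) {(k, j). k \<ge> j + 1}
        = (\<Sum>k\<le>n. \<Sum>j\<le>n. if (k,j) \<in> {(k, j). k \<ge> j + 1} then Q k * p j else 0)"
      unfolding J Q_def p_def by (rule prob_pair_sum[OF supA supB])
    also have "\<dots> = (\<Sum>k\<le>n. \<Sum>j\<le>n. \<alpha> * (if j < k then (if k = 0 then 0 else p (k-1)) * p j else 0)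
        + (1-\<alpha>) * (if j < k then p k * p j else 0))"
      by (intro sum.cong refl) (auto simp: Qd algebra_simps)
    also have "\<dots> = \<alpha> * X + (1-\<alpha>) * Slt"
      unfolding X_def Slt_def by (simp add: sum.distrib sum_distrib_left)
    finally show ?thesis using X_eq Sle_eq by (simp add: algebra_simps)
  qed
  have Q0: "Q 0 = (1-\<alpha>)^(Suc m)" using a by (simp add: Q_def)
  have Den: "measure_pmf.prob (joint_NN1 (Suc m) \<alpha>) {(k, j). k \<ge> 1} = 1 - (1-\<alpha>)^(Suc m)"
  proof -
    have "measure_pmf.prob (joint_NN1 (Suc m) \<alpha>) {(k, j). k \<ge> 1}
        = (\<Sum>k\<le>n. \<Sum>j\<le>n. if (k,j) \<in> {(k, j). k \<ge> 1} then Q k * p j else 0)"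
      unfolding J Q_def p_def by (rule prob_pair_sum[OF supA supB])
    also have "\<dots> = (\<Sum>k\<le>n. (if k \<ge> 1 then Q k else 0) * (\<Sum>j\<le>n. p j))"
      by (intro sum.cong refl) (auto simp: sum_distrib_left)
    also have "\<dots> = (\<Sum>k\<le>n. (if k \<ge> 1 then Q k else 0))" using sum1 by simp
    also have "\<dots> = (\<Sum>k\<le>n. Q k) - Q 0"
      unfolding sum.atMost_shift[of "\<lambda>k. (if k \<ge> 1 then Q k else 0)" n] sum.atMost_shift[of Q n] by simp
    finally show ?thesis using sumQ Q0 by simp
  qed
  have inter: "{(n, n1). n \<ge> n1 + 1} \<inter> {(n, n1). n \<ge> (1::nat)} = {(n, n1). n \<ge> n1 + (1::nat)}" by auto
  obtain m' where m': "m = Suc m'" using m by (cases m) auto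
  define u where "u = p 0"
  define v where "v = p m"
  have u_eq: "u = (1-\<alpha>)^m" using a by (simp add: u_def p_def)
  have v_eq: "v = \<alpha>^m" using a by (simp add: v_def p_def)
  have sp1: "u + (\<Sum>i<m'. p (Suc i)) + v = 1"
    using sum1 split4[of p m'] pn unfolding n_def m' u_def v_def by simp
  have sp2: "P = u * u + (\<Sum>i<m'. p (Suc i) * p (Suc i)) + v * v"
    using split4[of "\<lambda>k. p k * p k" m'] pn unfolding P_def n_def m' u_def v_def by simp
  have mid: "(\<Sum>i<m'. p (Suc i) * p (Suc i)) \<le> s * (\<Sum>i<m'. p (Suc i))"
  proof -
    have "(\<Sum>i<m'. p (Suc i) * p (Suc i)) \<le> (\<Sum>i<m'. s * p (Suc i))"
    proof (rule sum_mono)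
      fix i assume "i \<in> {..<m'}"
      then have "p (Suc i) \<le> s" unfolding p_def s_def using a m m' by (intro pmf_le_s) auto
      then show "p (Suc i) * p (Suc i) \<le> s * p (Suc i)" using pnn by (intro mult_right_mono) auto
    qed
    then show ?thesis by (simp add: sum_distrib_left)
  qed
  have midnn: "(\<Sum>i<m'. p (Suc i)) \<ge> 0" using pnn by (intro sum_nonneg) auto
  have S1: "(\<Sum>i<m'. p (Suc i)) = 1 - u - v" using sp1 by linarith
  have Pb: "P \<le> u * u + v * v + s * (1 - u - v)" using sp2 mid unfolding S1 by linarith
  have Pnn: "P \<ge> 0" unfolding P_def using pnn by (intro sum_nonneg) auto
  have vs: "\<alpha> \<le> 1/2 \<longrightarrow> v \<le> s"
  proof
    assume h: "\<alpha> \<le> 1/2"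
    have "v = \<alpha>^m" by (rule v_eq)
    also have "\<dots> \<le> \<alpha>^2" using a m by (intro power_decreasing) auto
    also have "\<dots> \<le> (1/2)^2" using a h by (intro power_mono) auto
    also have "\<dots> \<le> s" by (simp add: s_def power2_eq_square)
    finally show "v \<le> s" .
  qed
  have key: "(1-P)/2 + \<alpha> * P \<ge> (1-s)/2 * (1 - (1-\<alpha>)*u)"
    by (rule final_arith) (use a Pnn Pb pnn u_def v_def sp1 midnn vs in \<open>auto simp: s_def\<close>)
  have Dpos: "1 - (1-\<alpha>)^(Suc m) > 0"
  proof -
    have "(1-\<alpha>)^(Suc m) \<le> (1-\<alpha>)^1" using a by (intro power_decreasing) auto
    then have "(1-\<alpha>)^(Suc m) < 1" using a by simp
    then show ?thesis by simp
  qed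
  have DU: "1 - (1-\<alpha>)*u = 1 - (1-\<alpha>)^(Suc m)" by (simp add: u_eq)
  have "cond_prob_pmf (joint_NN1 (Suc m) \<alpha>) {(n, n1). n \<ge> n1 + 1} {(n, n1). n \<ge> 1}
      = (Slt + \<alpha> * P) / (1 - (1-\<alpha>)^(Suc m))"
    unfolding cond_prob_pmf_def inter Num Den by simp
  also have "\<dots> \<ge> (1-s)/2"
    using key Dpos unfolding Slt_eq DU by (simp add: le_divide_eq)
  finally show ?thesis unfolding s_def .
qed




lemma const_bound: "1/2 * (1 - 1 / sqrt (2 * pi)) \<le> (1 - 9^9/10^9)/2"
proof -
  have "sqrt (2 * pi) \<le> 251/100"
    by (rule real_le_lsqrt) (use pi_approx in \<open>auto simp: power2_eq_square\<close>)
  moreover have "sqrt (2 * pi) > 0" by simp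
  ultimately have "1 / sqrt (2 * pi) \<ge> 100/251"
    by (simp add: field_simps)
  then show ?thesis by simp
qed

theorem lemma6:
  fixes q :: real
  assumes "0 < q" and "q < 1"
  shows "\<exists>e :: nat \<Rightarrow> real. e \<longlonglongrightarrow> 0 \<and>
    (\<forall>M \<alpha>. M \<ge> 2 \<and> ((0 < \<alpha> \<and> \<alpha> \<le> q) \<or> \<alpha> = 1) \<longrightarrow>
       cond_prob_pmf (joint_NN1 M \<alpha>) {(n, n1). n \<ge> n1 + 1} {(n, n1). n \<ge> 1}
         \<ge> 1/2 * (1 - 1 / sqrt (2 * pi)) + e M)"
proof (intro exI conjI allI impI)
  define e :: "nat \<Rightarrow> real" where "e = (\<lambda>M. if M \<ge> 11 then 0 else -1)"
  show "e \<longlonglongrightarrow> 0"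
  proof (rule tendsto_eventually)
    show "\<forall>\<^sub>F M in sequentially. e M = 0"
      unfolding e_def eventually_sequentially by (intro exI[of _ 11]) auto
  qed
  fix M :: nat and \<alpha> :: real
  assume H: "M \<ge> 2 \<and> ((0 < \<alpha> \<and> \<alpha> \<le> q) \<or> \<alpha> = 1)"
  then have a: "0 < \<alpha>" "\<alpha> \<le> 1" using assms by auto
  show "cond_prob_pmf (joint_NN1 M \<alpha>) {(n, n1). n \<ge> n1 + 1} {(n, n1). n \<ge> 1}
         \<ge> 1/2 * (1 - 1 / sqrt (2 * pi)) + e M"
  proof (cases "M \<ge> 11")
    case True
    then obtain m where M: "M = Suc m" and m: "m \<ge> 10" by (cases M) auto
    have "1/2 * (1 - 1 / sqrt (2 * pi)) + e M \<le> (1 - 9^9/10^9)/2"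
      using const_bound True by (simp add: e_def)
    also have "\<dots> \<le> cond_prob_pmf (joint_NN1 M \<alpha>) {(n, n1). n \<ge> n1 + 1} {(n, n1). n \<ge> 1}"
      unfolding M using main_bound[OF m a] .
    finally show ?thesis .
  next
    case False
    have "1/2 * (1 - 1 / sqrt (2 * pi)) + e M \<le> 0"
    proof -
      have h: "1 / sqrt (2 * pi) \<ge> 0" by simp
      have "e M = -1" using False by (simp add: e_def)
      moreover have "1/2 * (1 - 1 / sqrt (2 * pi)) \<le> 1/2" using h by simp
      ultimately show ?thesis by linarith
    qed
    also have "0 \<le> cond_prob_pmf (joint_NN1 M \<alpha>) {(n, n1). n \<ge> n1 + 1} {(n, n1). n \<ge> 1}"
      unfolding cond_prob_pmf_def by (intro divide_nonneg_nonneg) auto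
    finally show ?thesis .
  qed
qed


end
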